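(* Let $q=2^s$, $s\ge1$, let $n$ be odd, and let $C_1,C_2\subseteq\mathbb F_q^n$ be cyclic codes with generating sets $I_1^{(q)},I_2^{(q)}\subseteq\mathbb Z_n$ which form a $q$-ary CSS-$T$ pair (in particular $C_2\subseteq C_1$). For $i=1,2$ let $I_i^{(2)}\subseteq\mathbb Z_n$ be the generating set of the binary cyclic code $\mathrm{tr}(C_i)$ (with respect to the same $\beta$). Then (1) $I_2^{(q)}\subseteq I_1^{(q)}$, and (2) $0\notin I_1^{(2)}+I_1^{(2)}+I_2^{(2)}$ (equivalently, $n\bmod n$ does not lie in this sum).
   Context: A cyclic code $C\subseteq\mathbb F_q^n$ with $\gcd(q,n)=1$ is an ideal of $\mathbb F_q[x]/(x^n-1)$ generated by a polynomial $g(x)\mid x^n-1$. Fix a primitive $n$-th root of unity $\beta$ in an extension of $\mathbb F_q$. The generating set of $C$ is $I=\{i\in\mathbb Z_n: g(\beta^i)\neq 0\}$ (the defining set is its complement). The Minkowski sum of $A,B\subseteq\mathbb Z_n$ is $A+B=\{a+b:a\in A,b\in B\}$. Let $\mathrm{tr}:\mathbb F_q\to\mathbb F_2$, $\mathrm{tr}(x)=\sum_{i=0}^{s-1}x^{2^i}$, applied coordinatewise; $\mathrm{tr}(C)=\{\mathrm{tr}(c):c\in C\}$ (this is a binary cyclic code). Let $\mathcal H=\mathbb C^q$ with orthonormal basis $\{|x\rangle:x\in\mathbb F_q\}$ and $\mathcal H^{\otimes n}$ with basis $|x\rangle=|x_1\rangle\otimes\cdots\otimes|x_n\rangle$, $x\in\mathbb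 F_q^n$. For $\lambda\in\mathbb F_q$, $T^{(\lambda)}=\sum_{x\in\mathbb F_q}e^{i\pi\,\mathrm{tr}(\lambda x)/4}|x\rangle\langle x|$, where $\mathrm{tr}(\lambda x)\in\{0,1\}$ is regarded as an integer. For $\mathbb F_q$-linear codes $C_2\subseteq C_1\subseteq\mathbb F_q^n$, the CSS code $\mathrm{CSS}(C_1,C_2)\subseteq\mathcal H^{\otimes n}$ is the complex linear span of the states $|w+C_2\rangle=|C_2|^{-1/2}\sum_{c\in C_2}|w+c\rangle$ for $w\in C_1$. The pair $(C_1,C_2)$ is a $q$-ary CSS-$T$ pair if $(T^{(\lambda)})^{\otimes n}$ maps $\mathrm{CSS}(C_1,C_2)$ into itself for every $\lambda\in\mathbb F_q$. *)

theory Defs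
  imports Complex_Main "HOL-Computational_Algebra.Polynomial"
begin

text \<open>Words of length n over a field: functions nat => 'a vanishing from index n on
  (coordinates are indexed by 0..n-1, i.e. by Z_n).\<close>
definition words :: "nat \<Rightarrow> (nat \<Rightarrow> 'a::zero) set" where
  "words n = {c. \<forall>i\<ge>n. c i = 0}"

definition poly_of_word :: "nat \<Rightarrow> (nat \<Rightarrow> 'a::comm_ring_1) \<Rightarrow> 'a poly" where
  "poly_of_word n c = (\<Sum>i<n. monom (c i) i)"

definition xn1 :: "nat \<Rightarrow> 'a::comm_ring_1 poly" where
  "xn1 n = monom 1 n - 1"

text \<open>C is the cyclic code of length n over the subfield K of 'a generated by g:
  g has coefficients in K, g divides x^n-1 in K[x], and C is the ideal generated by g
  in K[x]/(x^n-1), viewed as a set of words with entries in K.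
  (K = UNIV gives F_q; K = {0,1} gives the prime field F_2 when CARD('a) = 2^s.)\<close>
definition cyclic_code_gen :: "'a::field set \<Rightarrow> nat \<Rightarrow> 'a poly \<Rightarrow> (nat \<Rightarrow> 'a) set \<Rightarrow> bool" where
  "cyclic_code_gen K n g C \<longleftrightarrow>
     set (coeffs g) \<subseteq> K \<and>
     (\<exists>h. set (coeffs h) \<subseteq> K \<and> xn1 n = g * h) \<and>
     C = {c \<in> words n. (\<forall>i. c i \<in> K) \<and>
            (\<exists>f. set (coeffs f) \<subseteq> K \<and> poly_of_word n c = (f * g) mod xn1 n)}"

text \<open>Generating set I = {i in Z_n. g(beta^i) \<noteq> 0}, beta in an extension field 'b of 'a
  via the embedding emb.\<close>
definition gen_set :: "('a::zero \<Rightarrow> 'b::comm_ring_1) \<Rightarrow> 'b \<Rightarrow> nat \<Rightarrow> 'a poly \<Rightarrow> nat set" where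
  "gen_set emb \<beta> n g = {i. i < n \<and> poly (map_poly emb g) (\<beta> ^ i) \<noteq> 0}"

text \<open>Absolute trace F_q -> F_2, q = 2^s (values in the prime field {0,1} of 'a).\<close>
definition tr :: "nat \<Rightarrow> 'a::comm_ring_1 \<Rightarrow> 'a" where
  "tr s x = (\<Sum>i<s. x ^ (2 ^ i))"

definition trace_code :: "nat \<Rightarrow> (nat \<Rightarrow> 'a::comm_ring_1) set \<Rightarrow> (nat \<Rightarrow> 'a) set" where
  "trace_code s C = (\<lambda>c. \<lambda>i. tr s (c i)) ` C"

definition tr_int :: "nat \<Rightarrow> 'a::comm_ring_1 \<Rightarrow> int" where
  "tr_int s x = (if tr s x = 0 then 0 else 1)"

text \<open>States of H^{\<otimes> n}: functions from words to complex amplitudes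
  (the coefficient of |x>).\<close>
type_synonym 'a state = "(nat \<Rightarrow> 'a) \<Rightarrow> complex"

text \<open>(T^(lambda))^{\<otimes> n}: diagonal, |x> \<mapsto> prod_j exp(i pi tr(lambda x_j)/4) |x>.\<close>
definition T_op :: "nat \<Rightarrow> nat \<Rightarrow> 'a::comm_ring_1 \<Rightarrow> 'a state \<Rightarrow> 'a state" where
  "T_op s n lam \<psi> = (\<lambda>x. (\<Prod>j<n. exp (\<i> * of_real pi * of_int (tr_int s (lam * x j)) / 4)) * \<psi> x)"

definition coset_state :: "(nat \<Rightarrow> 'a::ab_group_add) set \<Rightarrow> (nat \<Rightarrow> 'a) \<Rightarrow> 'a state" where
  "coset_state C2 w = (\<lambda>x. complex_of_real (1 / sqrt (real (card C2))) *
                           (\<Sum>c\<in>C2. if x = (\<lambda>i. w i + c i) then 1 else 0))"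

definition cspan :: "'a state set \<Rightarrow> 'a state set" where
  "cspan S = {\<psi>. \<exists>F a. finite F \<and> F \<subseteq> S \<and> \<psi> = (\<lambda>x. \<Sum>v\<in>F. a v * v x)}"

definition CSS :: "(nat \<Rightarrow> 'a::ab_group_add) set \<Rightarrow> (nat \<Rightarrow> 'a) set \<Rightarrow> 'a state set" where
  "CSS C1 C2 = cspan (coset_state C2 ` C1)"

definition css_t_pair :: "nat \<Rightarrow> nat \<Rightarrow> (nat \<Rightarrow> 'a::comm_ring_1) set \<Rightarrow> (nat \<Rightarrow> 'a) set \<Rightarrow> bool" where
  "css_t_pair s n C1 C2 \<longleftrightarrow> C2 \<subseteq> C1 \<and>
     (\<forall>lam. \<forall>\<psi>\<in>CSS C1 C2. T_op s n lam \<psi> \<in> CSS C1 C2)"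

end

theory Submission
  imports Defs "HOL-Number_Theory.Residues" "Jordan_Normal_Form.Char_Poly" "HOL-Analysis.Complex_Transcendental"
begin


lemma char2_of_card:
  assumes "s \<ge> 1" "card (UNIV :: 'a::{field,finite} set) = 2 ^ s"
  shows "(1::'a) + 1 = 0"
proof -
  have fin: "finite (UNIV :: 'a set)" by simp
  have pos: "CHAR('a) > 0" using finite_imp_CHAR_pos[OF fin] .
  have pr: "prime CHAR('a)" using prime_CHAR_semidom[OF pos] .
  have "CHAR('a) dvd 2 ^ s" using CHAR_dvd_CARD[where 'a='a] assms(2) by simp
  hence "CHAR('a) dvd 2" using pr prime_dvd_power by blast
  hence "CHAR('a) = 2" using pr primes_dvd_imp_eq two_is_prime_nat by blast
  hence "of_nat 2 = (0::'a)" using of_nat_eq_0_iff_char_dvd by (metis dvd_refl)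
  thus ?thesis by simp
qed

lemma hom0: assumes "\<And>x y. emb (x + y) = emb x + emb y" shows "emb (0::'a::comm_ring_1) = (0::'b::comm_ring_1)"
  using assms[of 0 0] by simp

lemma emb_field_hom:
  assumes "emb (1::'a::field) = (1::'b::field)" "\<And>x y. emb (x + y) = emb x + emb y" "\<And>x y. emb (x * y) = emb x * emb y"
  shows "field_hom emb"
  by unfold_locales (use assms hom0[of emb, OF assms(2)] in auto)

lemma emb_mp_hom:
  assumes "emb (1::'a::field) = (1::'b::field)" "\<And>x y. emb (x + y) = emb x + emb y" "\<And>x y. emb (x * y) = emb x * emb y"
  shows "map_poly_comm_ring_hom emb"
  by unfold_locales (use assms hom0[of emb, OF assms(2)] in auto)

lemma sq_add_char2: assumes "(1::'a::field) + 1 = 0" shows "(x + y) * (x + y) = x * x + (y::'a) * y"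
proof -
  have "(x + y) * (x + y) = x * x + y * y + (1 + 1) * (x * y)" by (simp add: algebra_simps)
  thus ?thesis using assms by simp
qed

lemma frob_field_hom: assumes "(1::'a::field) + 1 = 0" shows "field_hom (\<lambda>x::'a. x * x)"
  by unfold_locales (simp_all add: sq_add_char2[OF assms] mult_ac)

lemma zero_one_sq: "(c::'a::field) * c = c \<longleftrightarrow> c \<in> {0, 1}"
proof
  assume "c * c = c"
  hence "c * (c - 1) = 0" by (simp add: algebra_simps)
  thus "c \<in> {0,1}" by auto
qed auto

lemma mod_01:
  assumes c2: "(1::'a::field) + 1 = 0" and p: "\<forall>i. Polynomial.coeff p i \<in> {0, 1::'a}" and q: "\<forall>i. Polynomial.coeff q i \<in> {0, 1::'a}"
  shows "\<forall>i. Polynomial.coeff (p mod q) i \<in> {0, 1}"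
proof -
  interpret F: field_hom "\<lambda>x::'a. x * x" by (rule frob_field_hom[OF c2])
  have mp: "map_poly (\<lambda>x::'a. x * x) r = r" if "\<forall>i. Polynomial.coeff r i \<in> {0, 1::'a}" for r
    by (rule poly_eqI) (use that zero_one_sq in \<open>auto simp: coeff_map_poly\<close>)
  have "map_poly (\<lambda>x::'a. x * x) (p mod q) = p mod q"
    using F.map_poly_mod[of p q] mp[OF p] mp[OF q] by simp
  hence "Polynomial.coeff (p mod q) i * Polynomial.coeff (p mod q) i = Polynomial.coeff (p mod q) i" for i
    by (metis coeff_map_poly mult_zero_left)
  thus ?thesis using zero_one_sq by blast
qed

lemma xn1_props: assumes "n > 0" shows "degree (xn1 n :: 'a::field poly) = n" "xn1 n \<noteq> (0::'a poly)"
proof -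
  have "xn1 n = (Polynomial.monom 1 n + [:-1:] :: 'a poly)" unfolding xn1_def by (simp add: monom_0 one_pCons)
  moreover have "degree (Polynomial.monom 1 n + [:-1:] :: 'a poly) = n"
    using assms by (subst degree_add_eq_left) (auto simp: degree_monom_eq)
  ultimately show "degree (xn1 n :: 'a::field poly) = n" by simp
  thus "xn1 n \<noteq> (0::'a poly)" using assms by auto
qed

lemma xn1_01: assumes c2: "(1::'a::field) + 1 = 0" shows "\<forall>i. Polynomial.coeff (xn1 n :: 'a poly) i \<in> {0, 1}"
proof -
  have m: "-1 = (1::'a)" using c2 by (metis add_eq_0_iff)
  show ?thesis unfolding xn1_def using m by (auto simp: coeff_monom)
qed

lemma deg_mod_xn1: assumes "n > 0" shows "\<forall>i\<ge>n. Polynomial.coeff (p mod xn1 n :: 'a::field poly) i = 0"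
proof -
  have d: "degree (xn1 n :: 'a poly) = n" using xn1_props(1)[OF assms] .
  have "p mod xn1 n = 0 \<or> degree (p mod xn1 n) < n"
    using degree_mod_less[OF xn1_props(2)[OF assms], of p] unfolding d .
  thus ?thesis by (auto intro: coeff_eq_0)
qed

lemma word_poly:
  assumes "n > 0" "\<forall>i\<ge>n. Polynomial.coeff p i = 0"
  shows "(\<lambda>i. Polynomial.coeff p i) \<in> words n" "poly_of_word n (\<lambda>i. Polynomial.coeff p i) = p"
proof -
  show "(\<lambda>i. Polynomial.coeff p i) \<in> words n" using assms unfolding words_def by auto
  have "degree p \<le> n - 1"
    using assms by (metis One_nat_def Suc_pred degree_le less_Suc_eq_le not_le)
  hence "(\<Sum>i\<le>n - 1. Polynomial.monom (Polynomial.coeff p i) i) = p" by (rule poly_as_sum_of_monoms')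
  moreover have "{..n - 1} = {..<n}" using assms by auto
  ultimately show "poly_of_word n (\<lambda>i. Polynomial.coeff p i) = p" unfolding poly_of_word_def by simp
qed



lemma of_nat_odd_c2: assumes "(1::'b::field) + 1 = 0" "odd n" shows "of_nat n = (1::'b)"
proof -
  obtain m where n: "n = 2 * m + 1" using assms(2) oddE by blast
  have "(of_nat n::'b) = of_nat m * (1 + 1) + 1" unfolding n by (simp add: algebra_simps)
  thus ?thesis using assms(1) by simp
qed

lemma orth:
  assumes c2: "(1::'b::field) + 1 = 0" and n: "odd n" and bn: "\<beta> ^ n = (1::'b)"
    and prim: "\<And>k. 0 < k \<Longrightarrow> k < n \<Longrightarrow> \<beta> ^ k \<noteq> 1"
    and a: "a < n" and a0: "a0 < n"
  shows "(\<Sum>k<n. (\<beta> ^ a * inverse \<beta> ^ a0) ^ k) = (if a = a0 then 1 else 0)"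
proof -
  have n0: "n > 0" using n by (cases n) auto
  have b0: "\<beta> \<noteq> 0" using bn n0 by (cases n) auto
  show ?thesis
  proof (cases "a = a0")
    case True
    hence "\<beta> ^ a * inverse \<beta> ^ a0 = 1" using b0 by (simp add: power_inverse)
    thus ?thesis using True of_nat_odd_c2[OF c2 n] by simp
  next
    case False
    define \<gamma> where "\<gamma> = \<beta> ^ a * inverse \<beta> ^ a0"
    have g1: "\<gamma> \<noteq> 1"
    proof
      assume "\<gamma> = 1"
      hence eq: "\<beta> ^ a = \<beta> ^ a0" unfolding \<gamma>_def using b0
        by (simp add: power_inverse field_simps)
      show False
      proof (cases "a < a0")
        case True
        have "\<beta> ^ a0 = \<beta> ^ (a0 - a) * \<beta> ^ a" using True by (simp add: power_add[symmetric])
        hence "\<beta> ^ (a0 - a) = 1" using eq b0 by simp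
        thus False using prim[of "a0 - a"] True a0 by auto
      next
        case False
        hence lt: "a0 < a" using \<open>a \<noteq> a0\<close> by auto
        have "\<beta> ^ a = \<beta> ^ (a - a0) * \<beta> ^ a0" using lt by (simp add: power_add[symmetric])
        hence "\<beta> ^ (a - a0) = 1" using eq b0 by simp
        thus False using prim[of "a - a0"] lt a by auto
      qed
    qed
    have gn: "\<gamma> ^ n = 1" unfolding \<gamma>_def
      by (simp add: power_mult_distrib power_mult[symmetric] mult.commute[of _ n] power_mult bn power_inverse)
    have "(\<Sum>k<n. \<gamma> ^ k) = (\<gamma> ^ n - 1) / (\<gamma> - 1)" using geometric_sum[OF g1] .
    thus ?thesis using gn False unfolding \<gamma>_def by simp
  qed
qed

lemma shiftsum:
  assumes c2: "(1::'b::field) + 1 = 0" and n: "odd n" and bn: "\<beta> ^ n = (1::'b)"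
    and prim: "\<And>k. 0 < k \<Longrightarrow> k < n \<Longrightarrow> \<beta> ^ k \<noteq> 1"
    and spec: "\<And>k a. k < n \<Longrightarrow> a < n \<Longrightarrow> (\<Sum>j<n. E k j * (\<beta> ^ a) ^ j) = (\<beta> ^ a) ^ k * H a"
    and j: "j < n" and a0: "a0 < n"
  shows "(\<Sum>k<n. (inverse \<beta> ^ a0) ^ k * E k j) = H a0 * (inverse \<beta> ^ a0) ^ j"
proof -
  let ?ib = "inverse \<beta>"
  have inv: "E k j = (\<Sum>a<n. (\<Sum>i<n. E k i * (\<beta> ^ a) ^ i) * (?ib ^ a) ^ j)" if k: "k < n" for k
  proof -
    have "(\<Sum>a<n. (\<Sum>i<n. E k i * (\<beta> ^ a) ^ i) * (?ib ^ a) ^ j)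
        = (\<Sum>a<n. \<Sum>i<n. E k i * (\<beta> ^ i * ?ib ^ j) ^ a)"
      by (rule sum.cong[OF refl], subst sum_distrib_right, rule sum.cong[OF refl])
         (simp add: power_mult_distrib power_mult[symmetric] mult.commute mult.left_commute)
    also have "\<dots> = (\<Sum>i<n. E k i * (\<Sum>a<n. (\<beta> ^ i * ?ib ^ j) ^ a))"
      by (subst sum.swap) (simp add: sum_distrib_left)
    also have "\<dots> = (\<Sum>i<n. E k i * (if i = j then 1 else 0))"
      by (rule sum.cong[OF refl]) (simp add: orth[OF c2 n bn prim _ j])
    also have "\<dots> = E k j" using j by (simp add: if_distrib cong: if_cong)
    finally show ?thesis by simp
  qed
  have "(\<Sum>k<n. (?ib ^ a0) ^ k * E k j) = (\<Sum>k<n. (?ib ^ a0) ^ k * (\<Sum>a<n. (\<beta> ^ a) ^ k * H a * (?ib ^ a) ^ j))"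
    by (rule sum.cong[OF refl]) (simp add: inv spec)
  also have "\<dots> = (\<Sum>a<n. H a * (?ib ^ a) ^ j * (\<Sum>k<n. (\<beta> ^ a * ?ib ^ a0) ^ k))"
    by (simp add: sum_distrib_left sum_distrib_right power_mult_distrib mult_ac) (rule sum.swap)
  also have "\<dots> = (\<Sum>a<n. H a * (?ib ^ a) ^ j * (if a = a0 then 1 else 0))"
    by (rule sum.cong[OF refl]) (simp add: orth[OF c2 n bn prim _ a0])
  also have "\<dots> = H a0 * (?ib ^ a0) ^ j" using a0 by (simp add: if_distrib cong: if_cong)
  finally show ?thesis .
qed

lemma triple_swap:
  "(\<Sum>j\<in>J. (\<Sum>k\<in>K. A k j) * (\<Sum>l\<in>L. B l j) * (\<Sum>m\<in>M. C m j)) =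
   (\<Sum>k\<in>K. \<Sum>l\<in>L. \<Sum>m\<in>M. \<Sum>j\<in>J. A k j * B l j * (C m j :: 'b::comm_ring_1))"
proof -
  have "(\<Sum>j\<in>J. (\<Sum>k\<in>K. A k j) * (\<Sum>l\<in>L. B l j) * (\<Sum>m\<in>M. C m j)) =
        (\<Sum>j\<in>J. \<Sum>k\<in>K. \<Sum>l\<in>L. \<Sum>m\<in>M. A k j * B l j * C m j)"
  proof (rule sum.cong[OF refl])
    fix j
    have "(\<Sum>k\<in>K. A k j) * (\<Sum>l\<in>L. B l j) * (\<Sum>m\<in>M. C m j)
       = (\<Sum>k\<in>K. \<Sum>l\<in>L. A k j * B l j) * (\<Sum>m\<in>M. C m j)" by (simp only: sum_product)
    also have "\<dots> = (\<Sum>k\<in>K. (\<Sum>l\<in>L. A k j * B l j) * (\<Sum>m\<in>M. C m j))" by (rule sum_distrib_right)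
    also have "\<dots> = (\<Sum>k\<in>K. \<Sum>l\<in>L. \<Sum>m\<in>M. A k j * B l j * C m j)"
      by (rule sum.cong[OF refl]) (simp only: sum_product)
    finally show "(\<Sum>k\<in>K. A k j) * (\<Sum>l\<in>L. B l j) * (\<Sum>m\<in>M. C m j) =
        (\<Sum>k\<in>K. \<Sum>l\<in>L. \<Sum>m\<in>M. A k j * B l j * C m j)" .
  qed
  also have "\<dots> = (\<Sum>k\<in>K. \<Sum>j\<in>J. \<Sum>l\<in>L. \<Sum>m\<in>M. A k j * B l j * C m j)" by (rule sum.swap)
  also have "\<dots> = (\<Sum>k\<in>K. \<Sum>l\<in>L. \<Sum>j\<in>J. \<Sum>m\<in>M. A k j * B l j * C m j)"
    by (rule sum.cong[OF refl], rule sum.swap)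
  also have "\<dots> = (\<Sum>k\<in>K. \<Sum>l\<in>L. \<Sum>m\<in>M. \<Sum>j\<in>J. A k j * B l j * C m j)"
    by (rule sum.cong[OF refl], rule sum.cong[OF refl], rule sum.swap)
  finally show ?thesis .
qed



definition ind :: "'a::zero \<Rightarrow> int" where "ind v = (if v = 0 then 0 else 1)"

lemma ind_add: assumes c2: "(1::'a::field) + 1 = 0" and "u \<in> {0,1::'a}" "v \<in> {0,1::'a}"
  shows "ind (u + v) = ind u + ind v - 2 * ind u * ind v"
  using assms by (auto simp: ind_def)

lemma ind_mul: "ind (u * v :: 'a::field) = ind u * ind v"
  by (auto simp: ind_def)

lemma ind_val: "u \<in> {0,1::'a::field} \<Longrightarrow> u = of_int (ind u)"
  by (auto simp: ind_def)

lemma comb: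
  assumes c2: "(1::'a::field) + 1 = 0"
    and D1v: "\<forall>x\<in>D1. \<forall>i. x i \<in> {0,1::'a}" and D2v: "\<forall>x\<in>D2. \<forall>i. x i \<in> {0,1::'a}"
    and z: "(\<lambda>i. 0) \<in> D1" and add: "\<forall>x\<in>D1. \<forall>y\<in>D1. (\<lambda>i. x i + y i) \<in> D1"
    and key: "\<forall>x\<in>D1. \<forall>y\<in>D2. (8::int) dvd ((\<Sum>j<n. ind (x j + y j)) - (\<Sum>j<n. ind (x j)))"
    and x1: "x1 \<in> D1" and x2: "x2 \<in> D1" and y: "y \<in> D2"
  shows "(\<Sum>j<n. x1 j * x2 j * y j) = 0"
proof -
  define r where "r j = ind (y j)" for j
  have F1: "(8::int) dvd (\<Sum>j<n. r j)"
    using key[rule_format, OF z y] by (simp add: r_def ind_def)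
  have F2: "(8::int) dvd 2 * (\<Sum>j<n. ind (x j) * r j)" if x: "x \<in> D1" for x
  proof -
    have "(\<Sum>j<n. ind (x j + y j)) = (\<Sum>j<n. ind (x j) + r j - 2 * (ind (x j) * r j))"
      by (rule sum.cong[OF refl]) (use D1v x D2v y ind_add[OF c2] in \<open>auto simp: r_def\<close>)
    also have "\<dots> = (\<Sum>j<n. ind (x j)) + (\<Sum>j<n. r j) - 2 * (\<Sum>j<n. ind (x j) * r j)"
      by (simp add: sum.distrib sum_subtractf sum_distrib_left)
    finally have eq: "(\<Sum>j<n. ind (x j + y j)) - (\<Sum>j<n. ind (x j)) = (\<Sum>j<n. r j) - 2 * (\<Sum>j<n. ind (x j) * r j)"
      by simp
    have "(8::int) dvd (\<Sum>j<n. ind (x j + y j)) - (\<Sum>j<n. ind (x j))" using key x y by blast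
    hence h: "(8::int) dvd (\<Sum>j<n. r j) - 2 * (\<Sum>j<n. ind (x j) * r j)" unfolding eq .
    have "(8::int) dvd (\<Sum>j<n. r j) - ((\<Sum>j<n. r j) - 2 * (\<Sum>j<n. ind (x j) * r j))"
      by (rule dvd_diff[OF F1 h])
    thus ?thesis by simp
  qed
  define p where "p j = ind (x1 j)" for j
  define q where "q j = ind (x2 j)" for j
  have A: "(8::int) dvd 2 * (\<Sum>j<n. p j * r j)" using F2[OF x1] by (simp add: p_def)
  have B: "(8::int) dvd 2 * (\<Sum>j<n. q j * r j)" using F2[OF x2] by (simp add: q_def)
  have x12: "(\<lambda>i. x1 i + x2 i) \<in> D1" using add x1 x2 by blast
  have "(\<Sum>j<n. ind (x1 j + x2 j) * r j) = (\<Sum>j<n. p j * r j + q j * r j - 2 * (p j * q j * r j))"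
  proof (rule sum.cong[OF refl])
    fix j
    have e: "ind (x1 j + x2 j) = p j + q j - 2 * p j * q j"
      unfolding p_def q_def by (rule ind_add[OF c2]) (use D1v x1 x2 in blast)+
    show "ind (x1 j + x2 j) * r j = p j * r j + q j * r j - 2 * (p j * q j * r j)"
      unfolding e by (simp add: algebra_simps)
  qed
  also have "\<dots> = (\<Sum>j<n. p j * r j) + (\<Sum>j<n. q j * r j) - 2 * (\<Sum>j<n. p j * q j * r j)"
    by (simp add: sum.distrib sum_subtractf sum_distrib_left)
  finally have C: "(8::int) dvd 2 * ((\<Sum>j<n. p j * r j) + (\<Sum>j<n. q j * r j) - 2 * (\<Sum>j<n. p j * q j * r j))"
    using F2[OF x12] by simp
  have "(8::int) dvd 4 * (\<Sum>j<n. p j * q j * r j)"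
  proof -
    have "4 * (\<Sum>j<n. p j * q j * r j) = 2 * (\<Sum>j<n. p j * r j) + 2 * (\<Sum>j<n. q j * r j)
       - 2 * ((\<Sum>j<n. p j * r j) + (\<Sum>j<n. q j * r j) - 2 * (\<Sum>j<n. p j * q j * r j))" by simp
    moreover have "(8::int) dvd 2 * (\<Sum>j<n. p j * r j) + 2 * (\<Sum>j<n. q j * r j)
       - 2 * ((\<Sum>j<n. p j * r j) + (\<Sum>j<n. q j * r j) - 2 * (\<Sum>j<n. p j * q j * r j))"
      by (rule dvd_diff[OF dvd_add[OF A B] C])
    ultimately show ?thesis by simp
  qed
  hence "(2::int) dvd (\<Sum>j<n. p j * q j * r j)" by presburger
  then obtain k where k: "(\<Sum>j<n. p j * q j * r j) = 2 * k" by blast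
  have "(\<Sum>j<n. x1 j * x2 j * y j) = (\<Sum>j<n. of_int (p j * q j * r j) :: 'a)"
  proof (rule sum.cong[OF refl])
    fix j
    have "x1 j \<in> {0,1}" "x2 j \<in> {0,1}" "y j \<in> {0,1}" using D1v x1 x2 D2v y by blast+
    hence "x1 j * x2 j * y j \<in> {0,1}" by auto
    hence "x1 j * x2 j * y j = of_int (ind (x1 j * x2 j * y j))" by (rule ind_val)
    thus "x1 j * x2 j * y j = of_int (p j * q j * r j)" by (simp add: p_def q_def r_def ind_mul)
  qed
  also have "\<dots> = of_int (2 * k)" by (simp flip: k)
  also have "\<dots> = 0"
  proof -
    have two: "(2::'a) = 0" using c2 by simp
    show ?thesis by (simp add: two)
  qed
  finally show ?thesis .
qed



lemma pow_word_add: "poly_of_word n (\<lambda>i. c i + c' i) = poly_of_word n c + poly_of_word n (c' :: nat \<Rightarrow> 'a::comm_ring_1)"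
  unfolding poly_of_word_def by (simp add: sum.distrib add_monom[symmetric])

lemma pow_word_neg: "poly_of_word n (\<lambda>i. - c i) = - poly_of_word n (c :: nat \<Rightarrow> 'a::comm_ring_1)"
  unfolding poly_of_word_def by (simp add: sum_negf[symmetric] minus_monom)

lemma code_memI:
  assumes "cyclic_code_gen K n g C" "c \<in> words n" "\<forall>i. c i \<in> K" "set (coeffs f) \<subseteq> K"
    "poly_of_word n c = (f * g) mod xn1 n"
  shows "c \<in> C"
proof -
  have Ceq: "C = {c \<in> words n. (\<forall>i. c i \<in> K) \<and>
            (\<exists>f. set (coeffs f) \<subseteq> K \<and> poly_of_word n c = (f * g) mod xn1 n)}"
    using assms(1) unfolding cyclic_code_gen_def by (elim conjE)
  show ?thesis unfolding Ceq using assms(2-) by blast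
qed

lemma code_memD:
  assumes "cyclic_code_gen K n g C" "c \<in> C"
  shows "c \<in> words n" "\<forall>i. c i \<in> K" "\<exists>f. set (coeffs f) \<subseteq> K \<and> poly_of_word n c = (f * g) mod xn1 n"
proof -
  have Ceq: "C = {c \<in> words n. (\<forall>i. c i \<in> K) \<and>
            (\<exists>f. set (coeffs f) \<subseteq> K \<and> poly_of_word n c = (f * g) mod xn1 n)}"
    using assms(1) unfolding cyclic_code_gen_def by (elim conjE)
  show "c \<in> words n" "\<forall>i. c i \<in> K" "\<exists>f. set (coeffs f) \<subseteq> K \<and> poly_of_word n c = (f * g) mod xn1 n"
    using assms(2) unfolding Ceq by blast+
qed

lemma code_add:
  assumes "cyclic_code_gen UNIV n g C" "c \<in> C" "c' \<in> C"
  shows "(\<lambda>i. c i + c' i) \<in> (C :: (nat \<Rightarrow> 'a::field) set)"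
proof -
  from code_memD[OF assms(1,2)] obtain f where f: "poly_of_word n c = (f * g) mod xn1 n" and w: "c \<in> words n"
    by blast
  from code_memD[OF assms(1,3)] obtain f' where f': "poly_of_word n c' = (f' * g) mod xn1 n" and w': "c' \<in> words n"
    by blast
  have "poly_of_word n (\<lambda>i. c i + c' i) = ((f + f') * g) mod xn1 n"
    by (simp add: pow_word_add f f' distrib_right poly_mod_add_left)
  moreover have "(\<lambda>i. c i + c' i) \<in> words n" using w w' unfolding words_def by auto
  ultimately show ?thesis by (intro code_memI[OF assms(1)]) auto
qed

lemma code_neg:
  assumes "cyclic_code_gen UNIV n g C" "c \<in> C"
  shows "(\<lambda>i. - c i) \<in> (C :: (nat \<Rightarrow> 'a::field) set)"
proof -
  from code_memD[OF assms(1,2)] obtain f where f: "poly_of_word n c = (f * g) mod xn1 n" and w: "c \<in> words n"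
    by blast
  have e: "poly_of_word n (\<lambda>i. - c i) = ((- f) * g) mod xn1 n"
    by (simp add: pow_word_neg f)
  have ww: "(\<lambda>i. - c i) \<in> words n" using w unfolding words_def by auto
  show ?thesis by (rule code_memI[OF assms(1) ww _ _ e]) auto
qed

lemma code_zero:
  assumes "cyclic_code_gen UNIV n g C"
  shows "(\<lambda>i. 0) \<in> (C :: (nat \<Rightarrow> 'a::field) set)"
proof -
  have e: "poly_of_word n (\<lambda>i. 0::'a) = (0 * g) mod xn1 n" unfolding poly_of_word_def by simp
  have ww: "(\<lambda>i. 0::'a) \<in> words n" unfolding words_def by auto
  show ?thesis by (rule code_memI[OF assms(1) ww _ _ e]) auto
qed

lemma words_finite: "finite (words n :: (nat \<Rightarrow> 'a::{zero,finite}) set)"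
proof -
  have "words n = {f :: nat \<Rightarrow> 'a. \<forall>x. (x \<in> {..<n} \<longrightarrow> f x \<in> UNIV) \<and> (x \<notin> {..<n} \<longrightarrow> f x = 0)}"
    unfolding words_def by auto
  thus ?thesis using finite_set_of_finite_funs[of "{..<n}" "UNIV :: 'a set" 0] by simp
qed

lemma code_finite: "cyclic_code_gen K n g C \<Longrightarrow> finite (C :: (nat \<Rightarrow> 'a::{field,finite}) set)"
  unfolding cyclic_code_gen_def using words_finite[of n] by (auto intro: finite_subset)

lemma frob_pow: assumes c2: "(1::'a::field) + 1 = 0" shows "(x + y) ^ (2 ^ i) = x ^ (2 ^ i) + (y::'a) ^ (2 ^ i)"
proof (induction i)
  case (Suc i)
  have "(x + y) ^ (2 ^ Suc i) = ((x + y) ^ (2 ^ i)) * ((x + y) ^ (2 ^ i))"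
    by (simp add: mult_2 power_add)
  also have "\<dots> = (x ^ 2 ^ i + y ^ 2 ^ i) * (x ^ 2 ^ i + y ^ 2 ^ i)" by (simp add: Suc)
  also have "\<dots> = x ^ 2 ^ i * x ^ 2 ^ i + y ^ 2 ^ i * y ^ 2 ^ i" by (rule sq_add_char2[OF c2])
  also have "\<dots> = x ^ (2 ^ Suc i) + y ^ (2 ^ Suc i)"
    by (simp add: power_add[symmetric] mult_2)
  finally show ?case .
qed simp

lemma tr_add: assumes c2: "(1::'a::field) + 1 = 0" shows "tr s (x + y) = tr s x + tr s (y::'a)"
  unfolding tr_def by (simp add: frob_pow[OF c2] sum.distrib)

lemma coset_count:
  fixes C2 :: "(nat \<Rightarrow> 'a::ab_group_add) set"
  assumes fin: "finite C2" and add: "\<forall>x\<in>C2. \<forall>y\<in>C2. (\<lambda>i. x i + y i) \<in> C2"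
    and neg: "\<forall>x\<in>C2. (\<lambda>i. - x i) \<in> C2"
  shows "(\<Sum>c'\<in>C2. if x = (\<lambda>i. w' i + c' i) then 1 else (0::complex)) = (if (\<lambda>i. x i - w' i) \<in> C2 then 1 else 0)"
proof -
  have "(\<Sum>c'\<in>C2. if x = (\<lambda>i. w' i + c' i) then 1 else (0::complex)) = (\<Sum>c'\<in>C2. if (\<lambda>i. x i - w' i) = c' then 1 else 0)"
  proof (rule sum.cong[OF refl])
    fix c' have "\<And>i. (x i - w' i = c' i) = (x i = w' i + c' i)" by (auto simp: diff_eq_eq add.commute)
    hence "(x = (\<lambda>i. w' i + c' i)) = ((\<lambda>i. x i - w' i) = c')" by (auto simp: fun_eq_iff)
    thus "(if x = (\<lambda>i. w' i + c' i) then 1 else (0::complex)) = (if (\<lambda>i. x i - w' i) = c' then 1 else 0)" by simp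
  qed
  also have "\<dots> = (if (\<lambda>i. x i - w' i) \<in> C2 then 1 else 0)" using fin by (simp add: sum.delta)
  finally show ?thesis .
qed

lemma exp_int8: fixes A B :: int
  assumes "exp (\<i> * of_real pi * of_int A / 4) = exp (\<i> * of_real pi * of_int B / 4)"
  shows "(8::int) dvd (B - A)"
proof -
  have "\<exists>m::int. \<i> * of_real pi * of_int A / 4 = \<i> * of_real pi * of_int B / 4 + of_real (of_int (2 * m) * pi) * \<i>"
    using assms by (simp only: exp_eq)
  then obtain m :: int where eq: "\<i> * of_real pi * of_int A / 4 = \<i> * of_real pi * of_int B / 4 + of_real (of_int (2 * m) * pi) * \<i>" ..
  define z where "z = \<i> * complex_of_real pi / 4"
  have z0: "z \<noteq> 0" unfolding z_def by simp
  have l: "\<i> * of_real pi * of_int A / 4 = z * of_int A" unfolding z_def by simp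
  have r1: "\<i> * of_real pi * of_int B / 4 = z * of_int B" unfolding z_def by simp
  have r2: "complex_of_real (of_int (2 * m) * pi) * \<i> = z * of_int (8 * m)" unfolding z_def by simp
  have "z * of_int A = z * of_int (B + 8 * m)" using eq unfolding l r1 r2 by (simp add: distrib_left)
  hence "(of_int A :: complex) = of_int (B + 8 * m)" using z0 by simp
  hence "A = B + 8 * m" by (simp only: of_int_eq_iff)
  hence "B - A = 8 * (- m)" by simp
  thus ?thesis by (rule dvdI)
qed

lemma css_phase:
  fixes C1 C2 :: "(nat \<Rightarrow> 'a::comm_ring_1) set"
  assumes css: "css_t_pair s n C1 C2" and fin: "finite C2" and z: "(\<lambda>i. 0) \<in> C2"
    and add: "\<forall>x\<in>C2. \<forall>y\<in>C2. (\<lambda>i. x i + y i) \<in> C2" and neg: "\<forall>x\<in>C2. (\<lambda>i. - x i) \<in> C2"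
    and w: "w \<in> C1" and c: "c \<in> C2"
  shows "(8::int) dvd ((\<Sum>j<n. tr_int s (w j + c j)) - (\<Sum>j<n. tr_int s (w j)))"
proof -
  define \<psi> where "\<psi> = coset_state C2 w"
  define wc where "wc = (\<lambda>i. w i + c i)"
  have psiin: "\<psi> \<in> CSS C1 C2"
    unfolding CSS_def cspan_def mem_Collect_eq
    by (intro exI[of _ "{\<psi>}"] exI[of _ "\<lambda>_. 1"]) (use w in \<open>auto simp: \<psi>_def\<close>)
  have "T_op s n 1 \<psi> \<in> CSS C1 C2" using css psiin unfolding css_t_pair_def by blast
  then obtain F a where F: "finite F" "F \<subseteq> coset_state C2 ` C1" and T: "T_op s n 1 \<psi> = (\<lambda>x. \<Sum>v\<in>F. a v * v x)"
    unfolding CSS_def cspan_def by blast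
  have mem_iff: "(\<lambda>i. w i - w' i) \<in> C2 \<longleftrightarrow> (\<lambda>i. wc i - w' i) \<in> C2" for w'
  proof
    assume h: "(\<lambda>i. w i - w' i) \<in> C2"
    have "(\<lambda>i. (w i - w' i) + c i) \<in> C2" using add[rule_format, OF h c] by simp
    moreover have "(\<lambda>i. (w i - w' i) + c i) = (\<lambda>i. wc i - w' i)" by (auto simp: wc_def fun_eq_iff algebra_simps)
    ultimately show "(\<lambda>i. wc i - w' i) \<in> C2" by simp
  next
    assume h: "(\<lambda>i. wc i - w' i) \<in> C2"
    have nc: "(\<lambda>i. - c i) \<in> C2" using neg c by blast
    have "(\<lambda>i. (wc i - w' i) + - c i) \<in> C2" using add[rule_format, OF h nc] by simp
    moreover have "(\<lambda>i. (wc i - w' i) + - c i) = (\<lambda>i. w i - w' i)" by (auto simp: wc_def fun_eq_iff algebra_simps)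
    ultimately show "(\<lambda>i. w i - w' i) \<in> C2" by simp
  qed
  have key: "v w = v wc" if "v \<in> coset_state C2 ` C1" for v
  proof -
    from that obtain w' where v: "v = coset_state C2 w'" by blast
    show ?thesis unfolding v coset_state_def coset_count[OF fin add neg] using mem_iff[of w'] by simp
  qed
  have "T_op s n 1 \<psi> w = T_op s n 1 \<psi> wc"
    unfolding T by (rule sum.cong[OF refl]) (use F key in auto)
  moreover define k where "k = complex_of_real (1 / sqrt (real (card C2)))"
  have psiw: "\<psi> w = k" unfolding \<psi>_def coset_state_def k_def coset_count[OF fin add neg] using z by simp
  have psiwc: "\<psi> wc = k" unfolding \<psi>_def coset_state_def k_def coset_count[OF fin add neg] using c
    by (simp add: wc_def)
  have k0: "k \<noteq> 0" unfolding k_def using fin z by (auto simp: card_gt_0_iff)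
  define P where "P x = (\<Prod>j<n. exp (\<i> * of_real pi * of_int (tr_int s (x j)) / 4))" for x :: "nat \<Rightarrow> 'a"
  have Tx: "T_op s n 1 \<psi> x = P x * \<psi> x" for x unfolding T_op_def P_def by simp
  ultimately have "P w = P wc" using psiw psiwc k0 by (simp add: Tx)
  have Pe: "P x = exp (\<i> * of_real pi * of_int (\<Sum>j<n. tr_int s (x j)) / 4)" for x
    unfolding P_def exp_sum[OF finite_lessThan, symmetric]
    by (simp add: sum_distrib_left sum_divide_distrib)
  define Sw where "Sw = (\<Sum>j<n. tr_int s (w j))"
  define Swc where "Swc = (\<Sum>j<n. tr_int s (wc j))"
  have "exp (\<i> * of_real pi * of_int Sw / 4) = exp (\<i> * of_real pi * of_int Swc / 4)"
    using \<open>P w = P wc\<close> unfolding Pe Sw_def Swc_def .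
  hence "(8::int) dvd Swc - Sw" by (rule exp_int8)
  thus ?thesis unfolding Sw_def Swc_def wc_def by simp
qed

theorem mainTheorem11:
  fixes s n :: nat
    and emb :: "'a::{field,finite} \<Rightarrow> 'b::field"
    and \<beta> :: 'b
    and g1 g2 h1 h2 :: "'a poly"
    and C1 C2 :: "(nat \<Rightarrow> 'a) set"
  assumes "s \<ge> 1" and "card (UNIV :: 'a set) = 2 ^ s" and "odd n"
    and "emb 1 = 1" and "\<And>x y. emb (x + y) = emb x + emb y" and "\<And>x y. emb (x * y) = emb x * emb y"
    and "\<beta> ^ n = 1" and "\<And>k. 0 < k \<Longrightarrow> k < n \<Longrightarrow> \<beta> ^ k \<noteq> 1"
    and "cyclic_code_gen UNIV n g1 C1" and "cyclic_code_gen UNIV n g2 C2"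
    and "css_t_pair s n C1 C2"
    and "cyclic_code_gen {0, 1} n h1 (trace_code s C1)"
    and "cyclic_code_gen {0, 1} n h2 (trace_code s C2)"
  shows "gen_set emb \<beta> n g2 \<subseteq> gen_set emb \<beta> n g1 \<and>
         0 \<notin> {(a + b + c) mod n | a b c. a \<in> gen_set emb \<beta> n h1 \<and> b \<in> gen_set emb \<beta> n h1 \<and> c \<in> gen_set emb \<beta> n h2}"
proof -
  note a = assms
  have n0: "n > 0" using a(3) by (cases n) auto
  have c2: "(1::'a) + 1 = 0" by (rule char2_of_card[OF a(1,2)])
  have e0: "emb 0 = 0" by (rule hom0) (rule a(5))
  interpret E: field_hom emb by (rule emb_field_hom[OF a(4-6)])
  interpret EP: map_poly_comm_ring_hom emb by (rule emb_mp_hom[OF a(4-6)])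
  have c2b: "(1::'b) + 1 = 0"
  proof -
    have "emb ((1::'a) + 1) = emb 1 + emb 1" by (rule a(5))
    thus ?thesis using c2 e0 a(4) by simp
  qed
  have b0: "\<beta> \<noteq> 0" using a(7) n0 by (cases n) auto
  have q0: "poly (map_poly emb (xn1 n)) (\<beta> ^ i) = 0" for i
  proof -
    have "map_poly emb (xn1 n :: 'a poly) = Polynomial.monom 1 n - 1"
      unfolding xn1_def by (simp add: EP.hom_minus a(4))
    moreover have "(\<beta> ^ i) ^ n = 1"
    proof -
      have "(\<beta> ^ i) ^ n = (\<beta> ^ n) ^ i" by (metis power_mult mult.commute)
      thus ?thesis using a(7) by simp
    qed
    ultimately show ?thesis by (simp add: poly_monom)
  qed
  have evmod: "poly (map_poly emb (p mod xn1 n)) (\<beta> ^ i) = poly (map_poly emb p) (\<beta> ^ i)" for p i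
  proof -
    have "map_poly emb (p div xn1 n * xn1 n + p mod xn1 n)
        = map_poly emb (p div xn1 n) * map_poly emb (xn1 n) + map_poly emb (p mod xn1 n)"
      by (simp only: EP.hom_add EP.hom_mult)
    hence "map_poly emb p = map_poly emb (p div xn1 n) * map_poly emb (xn1 n) + map_poly emb (p mod xn1 n)"
      by simp
    hence "poly (map_poly emb p) (\<beta> ^ i) = poly (map_poly emb (p div xn1 n)) (\<beta> ^ i) * poly (map_poly emb (xn1 n)) (\<beta> ^ i) + poly (map_poly emb (p mod xn1 n)) (\<beta> ^ i)"
      by simp
    thus ?thesis using q0[of i] by simp
  qed
  have spec: "poly (map_poly emb p) z = (\<Sum>j<n. emb (Polynomial.coeff p j) * z ^ j)"
    if "\<forall>i\<ge>n. Polynomial.coeff p i = 0" for p z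
  proof -
    have P: "(\<Sum>i<n. Polynomial.monom (Polynomial.coeff p i) i) = p"
      using word_poly(2)[OF n0 that] unfolding poly_of_word_def .
    have "poly (map_poly emb p) z = poly (map_poly emb (\<Sum>i<n. Polynomial.monom (Polynomial.coeff p i) i)) z"
      by (simp only: P)
    also have "\<dots> = (\<Sum>j<n. emb (Polynomial.coeff p j) * z ^ j)"
      by (simp add: EP.hom_sum poly_sum poly_monom)
    finally show ?thesis .
  qed
  have C21: "C2 \<subseteq> C1" using a(11) unfolding css_t_pair_def by blast
  have part1: "gen_set emb \<beta> n g2 \<subseteq> gen_set emb \<beta> n g1"
  proof
    fix i assume "i \<in> gen_set emb \<beta> n g2"
    hence i: "i < n" and nz: "poly (map_poly emb g2) (\<beta> ^ i) \<noteq> 0" unfolding gen_set_def by auto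
    define c where "c = (\<lambda>j. Polynomial.coeff (g2 mod xn1 n) j)"
    have cw: "c \<in> words n" and cp: "poly_of_word n c = g2 mod xn1 n"
      unfolding c_def using word_poly[OF n0 deg_mod_xn1[OF n0]] by auto
    have "c \<in> C2" by (rule code_memI[OF a(10) cw, of 1]) (auto simp: cp)
    hence "c \<in> C1" using C21 by blast
    then obtain f where f: "poly_of_word n c = (f * g1) mod xn1 n" using code_memD(3)[OF a(9)] by blast
    have "poly (map_poly emb g2) (\<beta> ^ i) = poly (map_poly emb (g2 mod xn1 n)) (\<beta> ^ i)" by (simp add: evmod)
    also have "\<dots> = poly (map_poly emb ((f * g1) mod xn1 n)) (\<beta> ^ i)" using cp f by simp
    also have "\<dots> = poly (map_poly emb f) (\<beta> ^ i) * poly (map_poly emb g1) (\<beta> ^ i)"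
      by (simp add: evmod EP.hom_mult)
    finally show "i \<in> gen_set emb \<beta> n g1" using nz i unfolding gen_set_def by auto
  qed
  define D1 where "D1 = trace_code s C1"
  define D2 where "D2 = trace_code s C2"
  have D1v: "\<forall>x\<in>D1. \<forall>i. x i \<in> {0,1::'a}" using code_memD(2)[OF a(12)] unfolding D1_def by blast
  have D2v: "\<forall>x\<in>D2. \<forall>i. x i \<in> {0,1::'a}" using code_memD(2)[OF a(13)] unfolding D2_def by blast
  have tr0: "tr s (0::'a) = 0" unfolding tr_def by (simp add: power_0_left)
  have D1z: "(\<lambda>i. 0) \<in> D1"
  proof -
    have "(\<lambda>i. tr s ((\<lambda>i. 0::'a) i)) \<in> D1" unfolding D1_def trace_code_def
      by (rule image_eqI[OF _ code_zero[OF a(9)]]) simp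
    thus ?thesis using tr0 by simp
  qed
  have D1add: "\<forall>x\<in>D1. \<forall>y\<in>D1. (\<lambda>i. x i + y i) \<in> D1"
  proof (intro ballI)
    fix x y assume "x \<in> D1" "y \<in> D1"
    then obtain w w' where w: "w \<in> C1" "x = (\<lambda>i. tr s (w i))" and w': "w' \<in> C1" "y = (\<lambda>i. tr s (w' i))"
      unfolding D1_def trace_code_def by blast
    have "(\<lambda>i. w i + w' i) \<in> C1" by (rule code_add[OF a(9) w(1) w'(1)])
    hence "(\<lambda>i. tr s ((\<lambda>i. w i + w' i) i)) \<in> D1" unfolding D1_def trace_code_def
      by (rule image_eqI[rotated]) simp
    thus "(\<lambda>i. x i + y i) \<in> D1" using w w' by (simp add: tr_add[OF c2])
  qed
  have fin2: "finite C2" by (rule code_finite[OF a(10)])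
  have z2: "(\<lambda>i. 0) \<in> C2" by (rule code_zero[OF a(10)])
  have add2: "\<forall>x\<in>C2. \<forall>y\<in>C2. (\<lambda>i. x i + y i) \<in> C2" using code_add[OF a(10)] by blast
  have neg2: "\<forall>x\<in>C2. (\<lambda>i. - x i) \<in> C2" using code_neg[OF a(10)] by blast
  have key: "\<forall>x\<in>D1. \<forall>y\<in>D2. (8::int) dvd ((\<Sum>j<n. ind (x j + y j)) - (\<Sum>j<n. ind (x j)))"
  proof (intro ballI)
    fix x y assume "x \<in> D1" "y \<in> D2"
    then obtain w c where w: "w \<in> C1" "x = (\<lambda>i. tr s (w i))" and c: "c \<in> C2" "y = (\<lambda>i. tr s (c i))"
      unfolding D1_def D2_def trace_code_def by blast
    have "(8::int) dvd ((\<Sum>j<n. tr_int s (w j + c j)) - (\<Sum>j<n. tr_int s (w j)))"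
      by (rule css_phase[OF a(11) fin2 z2 add2 neg2 w(1) c(1)])
    thus "(8::int) dvd ((\<Sum>j<n. ind (x j + y j)) - (\<Sum>j<n. ind (x j)))"
      using w c by (simp add: tr_int_def ind_def tr_add[OF c2])
  qed
  have KEY: "(\<Sum>j<n. x1 j * x2 j * y j) = 0" if "x1 \<in> D1" "x2 \<in> D1" "y \<in> D2" for x1 x2 y
    by (rule comb[OF c2 D1v D2v D1z D1add key that])
  have part2: "0 \<notin> {(a + b + c) mod n | a b c. a \<in> gen_set emb \<beta> n h1 \<and> b \<in> gen_set emb \<beta> n h1 \<and> c \<in> gen_set emb \<beta> n h2}"
  proof
    assume "0 \<in> {(a + b + c) mod n | a b c. a \<in> gen_set emb \<beta> n h1 \<and> b \<in> gen_set emb \<beta> n h1 \<and> c \<in> gen_set emb \<beta> n h2}"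
    then obtain a0 b0 c0 where abc': "0 = (a0 + b0 + c0) mod n" and
      ga: "a0 \<in> gen_set emb \<beta> n h1" and gb: "b0 \<in> gen_set emb \<beta> n h1" and gc: "c0 \<in> gen_set emb \<beta> n h2"
      by blast
    have abc: "(a0 + b0 + c0) mod n = 0" using abc' by simp
    define H1 where "H1 x = poly (map_poly emb h1) (\<beta> ^ x)" for x
    define H2 where "H2 x = poly (map_poly emb h2) (\<beta> ^ x)" for x
    have a0: "a0 < n" "H1 a0 \<noteq> 0" using ga unfolding gen_set_def H1_def by auto
    have b0': "b0 < n" "H1 b0 \<noteq> 0" using gb unfolding gen_set_def H1_def by auto
    have c0: "c0 < n" "H2 c0 \<noteq> 0" using gc unfolding gen_set_def H2_def by auto
    have shifted: "(\<lambda>j. Polynomial.coeff ((Polynomial.monom 1 k * h) mod xn1 n) j) \<in> trace_code s C"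
      and shspec: "(\<Sum>j<n. emb (Polynomial.coeff ((Polynomial.monom 1 k * h) mod xn1 n) j) * (\<beta> ^ x) ^ j)
                  = (\<beta> ^ x) ^ k * poly (map_poly emb h) (\<beta> ^ x)"
      if cc: "cyclic_code_gen {0, 1} n h (trace_code s C)" for h C k x
    proof -
      have hc: "set (coeffs h) \<subseteq> {0, 1}" using cc[unfolded cyclic_code_gen_def] by (rule conjunct1)
      have hco: "Polynomial.coeff h i \<in> {0, 1}" for i
      proof (cases "h \<noteq> 0 \<and> i \<le> degree h")
        case True thus ?thesis using coeff_in_coeffs[of h i] hc by blast
      next
        case False thus ?thesis by (auto simp: coeff_eq_0)
      qed
      have pco: "\<forall>i. Polynomial.coeff (Polynomial.monom 1 k * h) i \<in> {0, 1::'a}"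
        using hco by (simp add: coeff_monom_mult)
      have mco: "\<forall>i. Polynomial.coeff ((Polynomial.monom 1 k * h) mod xn1 n) i \<in> {0, 1::'a}"
        by (rule mod_01[OF c2 pco xn1_01[OF c2]])
      have wp: "(\<lambda>j. Polynomial.coeff ((Polynomial.monom 1 k * h) mod xn1 n) j) \<in> words n"
        "poly_of_word n (\<lambda>j. Polynomial.coeff ((Polynomial.monom 1 k * h) mod xn1 n) j) = (Polynomial.monom 1 k * h) mod xn1 n"
        using word_poly[OF n0 deg_mod_xn1[OF n0]] by auto
      have mc: "set (coeffs (Polynomial.monom (1::'a) k)) \<subseteq> {0, 1}"
        by (auto simp: coeffs_def coeff_monom)
      show "(\<lambda>j. Polynomial.coeff ((Polynomial.monom 1 k * h) mod xn1 n) j) \<in> trace_code s C"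
        by (rule code_memI[OF cc wp(1) mco mc wp(2)])
      have "(\<Sum>j<n. emb (Polynomial.coeff ((Polynomial.monom 1 k * h) mod xn1 n) j) * (\<beta> ^ x) ^ j)
          = poly (map_poly emb ((Polynomial.monom 1 k * h) mod xn1 n)) (\<beta> ^ x)"
        by (rule spec[symmetric]) (rule deg_mod_xn1[OF n0])
      also have "\<dots> = poly (map_poly emb (Polynomial.monom 1 k * h)) (\<beta> ^ x)" by (rule evmod)
      also have "\<dots> = (\<beta> ^ x) ^ k * poly (map_poly emb h) (\<beta> ^ x)"
        by (simp add: EP.hom_mult poly_monom a(4))
      finally show "(\<Sum>j<n. emb (Polynomial.coeff ((Polynomial.monom 1 k * h) mod xn1 n) j) * (\<beta> ^ x) ^ j)
                  = (\<beta> ^ x) ^ k * poly (map_poly emb h) (\<beta> ^ x)" .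
    qed
    define E1 where "E1 k j = emb (Polynomial.coeff ((Polynomial.monom 1 k * h1) mod xn1 n) j)" for k j
    define E2 where "E2 k j = emb (Polynomial.coeff ((Polynomial.monom 1 k * h2) mod xn1 n) j)" for k j
    have T0: "(\<Sum>j<n. E1 k j * E1 l j * E2 m j) = 0" for k l m
    proof -
      have "(\<Sum>j<n. E1 k j * E1 l j * E2 m j) = emb (\<Sum>j<n.
           Polynomial.coeff ((Polynomial.monom 1 k * h1) mod xn1 n) j *
           Polynomial.coeff ((Polynomial.monom 1 l * h1) mod xn1 n) j *
           Polynomial.coeff ((Polynomial.monom 1 m * h2) mod xn1 n) j)"
        unfolding E1_def E2_def by (simp add: E.hom_sum E.hom_mult)
      also have "\<dots> = emb 0"
        using KEY[OF shifted[OF a(12), folded D1_def] shifted[OF a(12), folded D1_def] shifted[OF a(13), folded D2_def]]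
        by simp
      finally show ?thesis using e0 by simp
    qed
    let ?ib = "inverse \<beta>"
    have S1: "(\<Sum>k<n. (?ib ^ a0) ^ k * E1 k j) = H1 a0 * (?ib ^ a0) ^ j" if "j < n" for j
    proof -
      have sp: "\<And>k x. k < n \<Longrightarrow> x < n \<Longrightarrow> (\<Sum>j<n. E1 k j * (\<beta> ^ x) ^ j) = (\<beta> ^ x) ^ k * H1 x"
        unfolding E1_def H1_def by (rule shspec[OF a(12)])
      show ?thesis by (rule shiftsum[OF c2b a(3) a(7) _ sp that a0(1)]) (use a(8) in blast)
    qed
    have S2: "(\<Sum>l<n. (?ib ^ b0) ^ l * E1 l j) = H1 b0 * (?ib ^ b0) ^ j" if "j < n" for j
    proof -
      have sp: "\<And>k x. k < n \<Longrightarrow> x < n \<Longrightarrow> (\<Sum>j<n. E1 k j * (\<beta> ^ x) ^ j) = (\<beta> ^ x) ^ k * H1 x"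
        unfolding E1_def H1_def by (rule shspec[OF a(12)])
      show ?thesis by (rule shiftsum[OF c2b a(3) a(7) _ sp that b0'(1)]) (use a(8) in blast)
    qed
    have S3: "(\<Sum>m<n. (?ib ^ c0) ^ m * E2 m j) = H2 c0 * (?ib ^ c0) ^ j" if "j < n" for j
    proof -
      have sp: "\<And>k x. k < n \<Longrightarrow> x < n \<Longrightarrow> (\<Sum>j<n. E2 k j * (\<beta> ^ x) ^ j) = (\<beta> ^ x) ^ k * H2 x"
        unfolding E2_def H2_def by (rule shspec[OF a(13)])
      show ?thesis by (rule shiftsum[OF c2b a(3) a(7) _ sp that c0(1)]) (use a(8) in blast)
    qed
    have "(0::'b) = (\<Sum>k<n. \<Sum>l<n. \<Sum>m<n. \<Sum>j<n.
            ((?ib ^ a0) ^ k * E1 k j) * ((?ib ^ b0) ^ l * E1 l j) * ((?ib ^ c0) ^ m * E2 m j))"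
    proof -
      have "(\<Sum>j<n. ((?ib ^ a0) ^ k * E1 k j) * ((?ib ^ b0) ^ l * E1 l j) * ((?ib ^ c0) ^ m * E2 m j))
          = ((?ib ^ a0) ^ k * (?ib ^ b0) ^ l * (?ib ^ c0) ^ m) * (\<Sum>j<n. E1 k j * E1 l j * E2 m j)" for k l m
        by (simp add: sum_distrib_left mult_ac)
      thus ?thesis by (simp add: T0)
    qed
    also have "\<dots> = (\<Sum>j<n. (\<Sum>k<n. (?ib ^ a0) ^ k * E1 k j) * (\<Sum>l<n. (?ib ^ b0) ^ l * E1 l j)
                         * (\<Sum>m<n. (?ib ^ c0) ^ m * E2 m j))"
      by (rule triple_swap[symmetric])
    also have "\<dots> = (\<Sum>j<n. (H1 a0 * (?ib ^ a0) ^ j) * (H1 b0 * (?ib ^ b0) ^ j) * (H2 c0 * (?ib ^ c0) ^ j))"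
      by (rule sum.cong[OF refl]) (simp add: S1 S2 S3)
    also have "\<dots> = (\<Sum>j<n. H1 a0 * H1 b0 * H2 c0 * (?ib ^ (a0 + b0 + c0)) ^ j)"
      by (rule sum.cong[OF refl]) (simp add: power_add power_mult_distrib mult_ac)
    also have "\<dots> = H1 a0 * H1 b0 * H2 c0"
    proof -
      obtain t where t: "a0 + b0 + c0 = n * t" using abc mod_0_imp_dvd dvd_def by metis
      have "?ib ^ n = 1" using a(7) by (simp add: power_inverse)
      hence "?ib ^ (a0 + b0 + c0) = 1" unfolding t by (simp add: power_mult)
      thus ?thesis using of_nat_odd_c2[OF c2b a(3)] by simp
    qed
    finally show False using a0(2) b0'(2) c0(2) by simp
  qed
  show ?thesis using part1 part2 by blast
qed

end
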